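(* Let $\varepsilon>0$, $\eta^\varepsilon_{\mu\nu}=\mathrm{diag}(1-i\varepsilon,-1,-1,-1)$, and for $x=(x_0,\mathbf{x})\in\mathbb{R}^4$ set $z^2=\eta^\varepsilon_{\mu\nu}x^\mu x^\nu=(1-i\varepsilon)x_0^2-\mathbf{x}^2$ and $x_E^2=x_0^2+\mathbf{x}^2$. Then $$|\sqrt{-z^2}|\le(1+\varepsilon^2)^{1/4}|x_E|,\qquad |\sqrt{-z^2}|\ge\Big(\tfrac1\varepsilon+\sqrt{1+\tfrac{1}{\varepsilon^2}}\Big)^{-1/2}|x_E|.$$ *)

theory Defs
  imports "HOL-Analysis.Analysis"
begin

definition zsq :: "real \<Rightarrow> real \<Rightarrow> real^3 \<Rightarrow> complex" where
  "zsq eps x0 xv = (1 - \<i> * complex_of_real eps) * complex_of_real (x0^2) - complex_of_real ((norm xv)^2)"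

definition xEsq :: "real \<Rightarrow> real^3 \<Rightarrow> real" where
  "xEsq x0 xv = x0^2 + (norm xv)^2"

end

theory Submission
  imports Defs
begin

theorem lemma4:
  fixes eps x0 :: real and xv :: "real^3"
  assumes "eps > 0"
  shows "cmod (csqrt (- zsq eps x0 xv)) \<le> (1 + eps^2) powr (1/4) * sqrt (xEsq x0 xv) \<and>
         cmod (csqrt (- zsq eps x0 xv)) \<ge> (1/eps + sqrt (1 + 1/eps^2)) powr (-1/2) * sqrt (xEsq x0 xv)"
proof -
  define a where "a = x0^2"
  define r where "r = (norm xv)^2"
  have a0: "a \<ge> 0" and r0: "r \<ge> 0" by (auto simp: a_def r_def)
  have S: "xEsq x0 xv = a + r" by (simp add: xEsq_def a_def r_def)
  have W: "- zsq eps x0 xv = Complex (r - a) (eps * a)"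
    by (simp add: complex_eq_iff zsq_def a_def r_def)
  define m where "m = (r - a)^2 + (eps*a)^2"
  have m0: "m \<ge> 0" by (simp add: m_def)
  have "cmod (csqrt (- zsq eps x0 xv)) = sqrt (cmod (Complex (r - a) (eps * a)))"
    by (simp only: W norm_csqrt)
  hence nw: "cmod (csqrt (- zsq eps x0 xv)) = sqrt (sqrt m)"
    by (simp add: cmod_def m_def)
  have up: "m \<le> (1+eps^2) * (a+r)^2"
  proof -
    have "(r-a)^2 \<le> (a+r)^2" using a0 r0 by (simp add: power2_eq_square algebra_simps)
    moreover have "(eps*a)^2 \<le> eps^2 * (a+r)^2" using a0 r0
      by (simp add: power_mult_distrib mult_left_mono power_mono)
    ultimately show ?thesis unfolding m_def by (simp add: algebra_simps)
  qed
  have p14: "(1 + eps^2) powr (1/4) = sqrt (sqrt (1+eps^2))"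
  proof -
    have "(1 + eps^2) powr (1/4) = ((1 + eps^2) powr (1/2)) powr (1/2)"
      by (simp add: powr_powr)
    thus ?thesis by (simp add: powr_half_sqrt add_pos_nonneg)
  qed
  have upper: "sqrt (sqrt m) \<le> sqrt (sqrt (1+eps^2)) * sqrt (a + r)"
  proof -
    have "sqrt m \<le> sqrt ((1+eps^2) * (a+r)^2)" using up by simp
    also have "\<dots> = sqrt (1+eps^2) * (a+r)" using a0 r0 by (simp add: real_sqrt_mult)
    finally have "sqrt m \<le> sqrt (1+eps^2) * (a+r)" .
    hence "sqrt (sqrt m) \<le> sqrt (sqrt (1+eps^2) * (a+r))" by simp
    thus ?thesis by (simp add: real_sqrt_mult)
  qed
  define c where "c = 1/eps + sqrt (1 + 1/eps^2)"
  have c0: "c > 0" using assms by (simp add: c_def add_pos_nonneg)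
  have key: "m * (4 + eps^2) \<ge> eps^2 * (a+r)^2"
  proof -
    have "m * (4 + eps^2) - eps^2 * (a+r)^2 = (2*(r-a) - eps^2*a)^2"
      unfolding m_def by (simp add: power2_eq_square algebra_simps)
    thus ?thesis by (smt (verit) zero_le_power2)
  qed
  have sq: "sqrt (1 + 1/eps^2) = sqrt (1 + eps^2) / eps"
  proof -
    have "1 + 1/eps^2 = (1 + eps^2) / eps^2" using assms by (simp add: field_simps)
    hence "sqrt (1 + 1/eps^2) = sqrt ((1 + eps^2) / eps^2)" by (simp only:)
    also have "\<dots> = sqrt (1 + eps^2) / sqrt (eps^2)" by (rule real_sqrt_divide)
    also have "\<dots> = sqrt (1 + eps^2) / eps" by (simp only: real_sqrt_abs abs_of_pos[OF assms])
    finally show ?thesis .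
  qed
  have ce: "c * eps = 1 + sqrt (1 + eps^2)" using assms unfolding c_def sq by (simp add: field_simps)
  have s1: "sqrt (1 + eps^2) \<ge> 1" by simp
  have ce2: "(c*eps)^2 \<ge> 4 + eps^2"
  proof -
    have "(c*eps)^2 = 2 + eps^2 + 2 * sqrt (1+eps^2)"
      unfolding ce by (simp add: power2_eq_square algebra_simps add_nonneg_nonneg)
    thus ?thesis using s1 by linarith
  qed
  have low: "(a+r)^2 \<le> c^2 * m"
  proof -
    have "eps^2 * (a+r)^2 \<le> m * (4+eps^2)" by (rule key)
    also have "\<dots> \<le> m * (c*eps)^2" using ce2 m0 by (simp add: mult_left_mono)
    finally have "eps^2 * (a+r)^2 \<le> eps^2 * (c^2 * m)" by (simp add: power_mult_distrib algebra_simps)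
    thus ?thesis using assms by simp
  qed
  have lower: "c powr (-1/2) * sqrt (a + r) \<le> sqrt (sqrt m)"
  proof -
    have "a + r \<le> c * sqrt m"
    proof -
      have "a + r = sqrt ((a+r)^2)" using a0 r0 by simp
      also have "\<dots> \<le> sqrt (c^2 * m)" using low by (rule real_sqrt_le_mono)
      also have "\<dots> = c * sqrt m" using c0 by (simp add: real_sqrt_mult)
      finally show ?thesis .
    qed
    hence "sqrt (a+r) \<le> sqrt c * sqrt (sqrt m)" by (simp add: real_sqrt_mult[symmetric])
    hence "sqrt (a+r) / sqrt c \<le> sqrt (sqrt m)" using c0 by (simp add: divide_le_eq mult.commute)
    moreover have "c powr (-1/2) = 1 / sqrt c" using c0
      by (simp add: powr_minus_divide powr_half_sqrt)
    ultimately show ?thesis by simp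
  qed
  show ?thesis using upper lower nw p14 S by (simp add: c_def)
qed

end
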